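(* Let $I=\{1,\dots,\ell\}$, $J=\{\ell+1,\dots,p\}$, let $h_1,\dots,h_p\colon\mathbb R^n\times\mathbb R^m\to\overline{\mathbb R}$ and $\Gamma(x):=\{y\in\mathbb R^m\mid h_i(x,y)\le0\ (i\in I),\ h_i(x,y)=0\ (i\in J)\}$. Fix $\bar x\in\operatorname{dom}\Gamma$ and $\bar y\in\Gamma(\bar x)$. Assume that $h_1,\dots,h_p$ are continuous and continuously differentiable with respect to $y$ in a neighborhood of $\{\bar x\}\times\Gamma(\bar x)$, that $h_i(x,\cdot)\colon\mathbb R^m\to\mathbb R$ is continuous for every $x\in\operatorname{dom}\Gamma$ and every $i$, and assume (A1): for each $x\in\mathbb R^n$, $h_i(x,\cdot)$ is convex for $i\in I$ and affine for $i\in J$; and (A2): $\Gamma$ is locally bounded at $\bar x$. Then the following are equivalent: (a) $\Gamma$ is R-regular at $(\bar x,\bar y)$ with respect to $\operatorname{dom}\Gamma$; (b) there is a constant $M>0$ such that for all sequences $\{x^k\}\subset\operatorname{dom}\Gamma$, $\{\nu^k\}\subset\mathbb R^m$, $\{y^k\}\subset\mathbb R^m$ with $x^k\to\bar x$, $\nu^k\to\bar y$, $\nu^k\notin\Gamma(x^k)$ and $y^k\in\Pi(\nu^k,\Gamma(x^k))$ for all $k$, the set $\Lambda^M_{\nu^k}(x^k,y^k)$ is nonempty for all sufficiently large $k$.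
   Context: $\operatorname{dom}\Gamma:=\{x\mid\Gamma(x)\ne\emptyset\}$; $\|\cdot\|$ Euclidean norm; $\operatorname{dist}(\nu,A):=\inf_{z\in A}\|z-\nu\|$; $\Pi(\nu,A):=\operatorname{argmin}\{\|z-\nu\|\mid z\in A\}$. $\Gamma$ is locally bounded at $\bar x$ if there are a bounded set $B$ and a neighborhood $V$ of $\bar x$ with $\Gamma(x)\subset B$ for all $x\in V$. $\Gamma$ is R-regular at $(\bar x,\bar y)$ with respect to $\Omega$ if there exist $\kappa>0$ and a neighborhood $U$ of $(\bar x,\bar y)$ such that $\operatorname{dist}(y,\Gamma(x))\le\kappa\max\{0,\max_{i\in I}h_i(x,y),\max_{i\in J}|h_i(x,y)|\}$ for all $(x,y)\in U\cap(\Omega\times\mathbb R^m)$. For $x\in\operatorname{dom}\Gamma$, $\nu\notin\Gamma(x)$, $y\in\Pi(\nu,\Gamma(x))$, $M>0$: $\Lambda_\nu(x,y):=\{\lambda\in\mathbb R^p\mid \frac{y-\nu}{\|y-\nu\|}+\sum_{i=1}^p\lambda_i\nabla_yh_i(x,y)=0,\ \lambda_i\ge0,\ \lambda_ih_i(x,y)=0\ \forall i\in I\}$ and $\Lambda^M_\nu(x,y):=\{\lambda\in\Lambda_\nu(x,y)\mid\sum_{i=1}^p|\lambda_i|\le M\}$. *)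

theory Defs
  imports "HOL-Analysis.Analysis"
begin

definition Gam :: "(nat \<Rightarrow> (real^'n) \<times> (real^'m) \<Rightarrow> ereal) \<Rightarrow> nat \<Rightarrow> nat \<Rightarrow> real^'n \<Rightarrow> (real^'m) set" where
  "Gam h l p x = {y. (\<forall>i\<in>{1..l}. h i (x, y) \<le> 0) \<and> (\<forall>i\<in>{l+1..p}. h i (x, y) = 0)}"

definition domG :: "('a \<Rightarrow> 'b set) \<Rightarrow> 'a set" where
  "domG G = {x. G x \<noteq> {}}"

definition edist_set :: "'b::metric_space \<Rightarrow> 'b set \<Rightarrow> ereal" where
  "edist_set v A = (if A = {} then \<infinity> else ereal (infdist v A))"

definition proj :: "'b::real_normed_vector \<Rightarrow> 'b set \<Rightarrow> 'b set" where
  "proj v A = {z \<in> A. \<forall>w\<in>A. norm (z - v) \<le> norm (w - v)}"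

definition locally_bounded_at :: "('a::topological_space \<Rightarrow> 'b::metric_space set) \<Rightarrow> 'a \<Rightarrow> bool" where
  "locally_bounded_at G xb \<longleftrightarrow>
     (\<exists>B V. bounded B \<and> open V \<and> xb \<in> V \<and> (\<forall>x\<in>V. G x \<subseteq> B))"

definition resid :: "(nat \<Rightarrow> 'a \<times> 'b \<Rightarrow> ereal) \<Rightarrow> nat \<Rightarrow> nat \<Rightarrow> 'a \<Rightarrow> 'b \<Rightarrow> ereal" where
  "resid h l p x y = Max (insert 0 ((\<lambda>i. h i (x, y)) ` {1..l} \<union> (\<lambda>i. \<bar>h i (x, y)\<bar>) ` {l+1..p}))"

definition R_regular :: "(nat \<Rightarrow> (real^'n) \<times> (real^'m) \<Rightarrow> ereal) \<Rightarrow> nat \<Rightarrow> nat \<Rightarrow> real^'n \<Rightarrow> real^'m \<Rightarrow> (real^'n) set \<Rightarrow> bool" where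
  "R_regular h l p xb yb \<Omega> \<longleftrightarrow>
     (\<exists>\<kappa>>0. \<exists>U. open U \<and> (xb, yb) \<in> U \<and>
        (\<forall>x y. (x, y) \<in> U \<and> x \<in> \<Omega> \<longrightarrow>
           edist_set y (Gam h l p x) \<le> ereal \<kappa> * resid h l p x y))"

text \<open>Partial gradient of h with respect to y at (x,y) (of the real-valued function
  y' |-> h(x,y')); meaningful where this function is differentiable.\<close>
definition ygrad :: "('a \<times> 'b::real_inner \<Rightarrow> ereal) \<Rightarrow> 'a \<Rightarrow> 'b \<Rightarrow> 'b" where
  "ygrad f x y = (SOME g. ((\<lambda>y'. real_of_ereal (f (x, y'))) has_derivative (\<lambda>v. g \<bullet> v)) (at y))"

definition Lam :: "(nat \<Rightarrow> (real^'n) \<times> (real^'m) \<Rightarrow> ereal) \<Rightarrow> nat \<Rightarrow> nat \<Rightarrow> real^'m \<Rightarrow> real^'n \<Rightarrow> real^'m \<Rightarrow> (nat \<Rightarrow> real) set" where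
  "Lam h l p v x y = {lam. (\<forall>i. i \<notin> {1..p} \<longrightarrow> lam i = 0) \<and>
      (1 / norm (y - v)) *\<^sub>R (y - v) + (\<Sum>i=1..p. lam i *\<^sub>R ygrad (h i) x y) = 0 \<and>
      (\<forall>i\<in>{1..l}. lam i \<ge> 0 \<and> ereal (lam i) * h i (x, y) = 0)}"

definition LamM :: "(nat \<Rightarrow> (real^'n) \<times> (real^'m) \<Rightarrow> ereal) \<Rightarrow> nat \<Rightarrow> nat \<Rightarrow> real \<Rightarrow> real^'m \<Rightarrow> real^'n \<Rightarrow> real^'m \<Rightarrow> (nat \<Rightarrow> real) set" where
  "LamM h l p M v x y = {lam \<in> Lam h l p v x y. (\<Sum>i=1..p. \<bar>lam i\<bar>) \<le> M}"

definition ereal_convex :: "('b::real_vector \<Rightarrow> ereal) \<Rightarrow> bool" where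
  "ereal_convex f \<longleftrightarrow> convex {(y, r::real). f y \<le> ereal r}"

definition ereal_affine :: "('b::real_inner \<Rightarrow> ereal) \<Rightarrow> bool" where
  "ereal_affine f \<longleftrightarrow> (\<exists>a b. \<forall>y. f y = ereal (a \<bullet> y + b))"

end

theory Submission
  imports Defs
begin

lemma dquot_lim:
  fixes f :: "'a::real_inner \<Rightarrow> real"
  assumes "(f has_derivative (\<lambda>v. g \<bullet> v)) (at y)"
  shows "((\<lambda>t. (f (y + t *\<^sub>R d) - f y) / t) \<longlongrightarrow> g \<bullet> d) (at_right 0)"
proof -
  have l: "((\<lambda>t. y + t *\<^sub>R d) has_derivative (\<lambda>t. t *\<^sub>R d)) (at 0)"
    by (auto intro!: derivative_eq_intros)
  have "(f \<circ> (\<lambda>t. y + t *\<^sub>R d) has_derivative (\<lambda>v. g \<bullet> v) \<circ> (\<lambda>t. t *\<^sub>R d)) (at 0)"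
    using diff_chain_at[OF l] assms by simp
  then have "((\<lambda>t. f (y + t *\<^sub>R d)) has_field_derivative (g \<bullet> d)) (at 0)"
    unfolding has_field_derivative_def by (simp add: o_def mult.commute[of _ "g \<bullet> d"])
  then have "((\<lambda>t. (f (y + t *\<^sub>R d) - f y) / t) \<longlongrightarrow> g \<bullet> d) (at 0)"
    unfolding has_field_derivative_iff by simp
  then show ?thesis by (rule tendsto_mono[OF at_le, rotated]) simp
qed

lemma grad_ineq:
  fixes f :: "'a::real_inner \<Rightarrow> real"
  assumes "(f has_derivative (\<lambda>v. g \<bullet> v)) (at y)"
    and "\<And>t. 0 < t \<Longrightarrow> t < 1 \<Longrightarrow> f (y + t *\<^sub>R d) \<le> (1 - t) * f y + t * f (y + d)"
  shows "g \<bullet> d \<le> f (y + d) - f y"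
proof -
  have "eventually (\<lambda>t. (f (y + t *\<^sub>R d) - f y) / t \<le> f (y + d) - f y) (at_right 0)"
    using eventually_at_right_real[of 0 1, OF zero_less_one]
  proof (rule eventually_mono)
    fix t :: real assume "t \<in> {0<..<1}"
    then have t: "0 < t" "t < 1" by auto
    have "f (y + t *\<^sub>R d) - f y \<le> t * (f (y + d) - f y)" using assms(2)[OF t] by (simp add: algebra_simps)
    then show "(f (y + t *\<^sub>R d) - f y) / t \<le> f (y + d) - f y" using t by (simp add: divide_simps mult.commute)
  qed
  then show ?thesis
    using tendsto_le[OF _ tendsto_const dquot_lim[OF assms(1)]] by simp
qed

lemma deriv_bound:
  fixes f :: "'a::real_inner \<Rightarrow> real"
  assumes "(f has_derivative (\<lambda>v. g \<bullet> v)) (at y)" "e > 0"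
  shows "eventually (\<lambda>t. 0 < t \<and> \<bar>f (y + t *\<^sub>R d) - f y - t * (g \<bullet> d)\<bar> \<le> t * e) (at_right 0)"
proof -
  have "eventually (\<lambda>t. dist ((f (y + t *\<^sub>R d) - f y) / t) (g \<bullet> d) < e) (at_right 0)"
    using tendstoD[OF dquot_lim[OF assms(1)] assms(2)] .
  moreover have "eventually (\<lambda>t. 0 < (t::real)) (at_right 0)" by (simp add: eventually_at_right_less)
  ultimately show ?thesis
  proof (rule eventually_mono[OF eventually_conj])
    fix t :: real assume a: "dist ((f (y + t *\<^sub>R d) - f y) / t) (g \<bullet> d) < e \<and> 0 < t"
    then have "\<bar>(f (y + t *\<^sub>R d) - f y - t * (g \<bullet> d)) / t\<bar> < e"
      by (simp add: dist_real_def diff_divide_distrib)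
    then show "0 < t \<and> \<bar>f (y + t *\<^sub>R d) - f y - t * (g \<bullet> d)\<bar> \<le> t * e"
      using a by (simp add: abs_divide divide_simps mult.commute)
  qed
qed

lemma conv_ereal:
  assumes "ereal_convex f" "\<And>y. \<bar>f y\<bar> \<noteq> \<infinity>" "0 \<le> t" "t \<le> 1"
  shows "real_of_ereal (f ((1 - t) *\<^sub>R a + t *\<^sub>R b)) \<le> (1 - t) * real_of_ereal (f a) + t * real_of_ereal (f b)"
proof -
  let ?E = "{(y, r::real). f y \<le> ereal r}"
  have c: "convex ?E" using assms(1) by (simp add: ereal_convex_def)
  have "(a, real_of_ereal (f a)) \<in> ?E" "(b, real_of_ereal (f b)) \<in> ?E"
    using assms(2) by (auto simp: ereal_real)
  from convexD[OF c this, of "1 - t" t] assms(3,4)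
  have "(1 - t) *\<^sub>R (a, real_of_ereal (f a)) + t *\<^sub>R (b, real_of_ereal (f b)) \<in> ?E" by simp
  then have "f ((1 - t) *\<^sub>R a + t *\<^sub>R b) \<le> ereal ((1 - t) * real_of_ereal (f a) + t * real_of_ereal (f b))"
    by (simp add: scaleR_prod_def)
  then show ?thesis using assms(2)[of "(1 - t) *\<^sub>R a + t *\<^sub>R b"]
    by (metis ereal_less_eq(3) ereal_real)
qed

lemma aff_ereal:
  assumes "ereal_affine f"
  shows "\<bar>f y\<bar> \<noteq> \<infinity>"
    "real_of_ereal (f ((1 - t) *\<^sub>R a + t *\<^sub>R b)) = (1 - t) * real_of_ereal (f a) + t * real_of_ereal (f b)"
proof -
  obtain c e where ce: "\<And>y. f y = ereal (c \<bullet> y + e)" using assms by (auto simp: ereal_affine_def)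
  show "\<bar>f y\<bar> \<noteq> \<infinity>" by (simp add: ce)
  show "real_of_ereal (f ((1 - t) *\<^sub>R a + t *\<^sub>R b)) = (1 - t) * real_of_ereal (f a) + t * real_of_ereal (f b)"
    by (simp add: ce inner_add_right algebra_simps)
qed

lemma seq_inv_conv:
  fixes f :: "nat \<Rightarrow> 'a::metric_space"
  assumes "\<And>k. dist (f k) a < 1 / real (Suc k)"
  shows "f \<longlonglongrightarrow> a"
proof (rule metric_LIMSEQ_I)
  fix r :: real assume r: "0 < r"
  obtain N where N: "inverse (real (Suc N)) < r" using reals_Archimedean[OF r] by blast
  show "\<exists>no. \<forall>n\<ge>no. dist (f n) a < r"
  proof (intro exI allI impI)
    fix n assume "N \<le> n"
    then have "1 / real (Suc n) \<le> 1 / real (Suc N)" by (simp add: frac_le)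
    then show "dist (f n) a < r" using assms[of n] N by (simp add: inverse_eq_divide)
  qed
qed

lemma projdist:
  fixes A :: "'a::euclidean_space set"
  assumes "y \<in> proj v A" "closed A"
  shows "norm (y - v) = infdist v A"
proof -
  have yA: "y \<in> A" and yl: "\<forall>w\<in>A. norm (y - v) \<le> norm (w - v)" using assms(1) by (auto simp: proj_def)
  then have "A \<noteq> {}" by auto
  then obtain w where w: "w \<in> A" "infdist v A = dist v w" using infdist_attains_inf[OF assms(2)] by metis
  have "norm (y - v) \<le> norm (w - v)" using yl w by blast
  then have "norm (y - v) \<le> infdist v A" using w by (simp add: dist_norm norm_minus_commute)
  moreover have "infdist v A \<le> norm (y - v)" using infdist_le[OF yA, of v] by (simp add: dist_norm norm_minus_commute)
  ultimately show ?thesis by simp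
qed


lemma farkas_hull:
  fixes z :: "'a::euclidean_space" and v :: "'g \<Rightarrow> 'a"
  assumes G: "finite G"
    and H: "\<And>d. z \<bullet> d \<le> Max (insert 0 ((\<lambda>g. v g \<bullet> d) ` G))"
  shows "\<exists>\<mu>. (\<forall>g. 0 \<le> \<mu> g) \<and> (\<forall>g. g \<notin> G \<longrightarrow> \<mu> g = 0) \<and> sum \<mu> G \<le> 1 \<and> z = (\<Sum>g\<in>G. \<mu> g *\<^sub>R v g)"
proof -
  let ?S = "convex hull (insert 0 (v ` G))"
  let ?C = "{w. \<exists>\<mu>. (\<forall>g. 0 \<le> \<mu> g) \<and> (\<forall>g. g \<notin> G \<longrightarrow> \<mu> g = 0) \<and> sum \<mu> G \<le> 1 \<and> w = (\<Sum>g\<in>G. \<mu> g *\<^sub>R v g)}"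
  have zS: "z \<in> ?S"
  proof (rule ccontr)
    assume nz: "z \<notin> ?S"
    have "compact ?S" using G by (intro compact_convex_hull finite_imp_compact) simp
    then have "closed ?S" by (rule compact_imp_closed)
    then obtain a b where ab: "a \<bullet> z < b" "\<forall>x\<in>?S. a \<bullet> x > b"
      using separating_hyperplane_closed_point[OF convex_convex_hull _ nz] by blast
    have sub: "insert 0 (v ` G) \<subseteq> ?S" by (rule hull_subset)
    have "Max (insert 0 ((\<lambda>g. v g \<bullet> (-a)) ` G)) < - b"
      using G sub ab(2) by (auto simp: inner_commute) (metis image_subset_iff inner_commute)
    moreover have "z \<bullet> (-a) > -b" using ab(1) by (simp add: inner_commute)
    ultimately show False using H[of "-a"] by linarith
  qed
  have "?S \<subseteq> ?C"
  proof (rule hull_minimal)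
    show "insert 0 (v ` G) \<subseteq> ?C"
    proof
      fix w assume "w \<in> insert 0 (v ` G)"
      then show "w \<in> ?C"
      proof
        assume "w = 0" then show ?thesis by (intro CollectI exI[of _ "\<lambda>_. 0"]) simp
      next
        assume "w \<in> v ` G"
        then obtain g0 where g0: "g0 \<in> G" "w = v g0" by auto
        have e1: "(\<Sum>g\<in>G. (if g = g0 then 1 else 0) *\<^sub>R v g) = (\<Sum>g\<in>G. if g = g0 then v g else 0)"
          by (rule sum.cong) auto
        have e2: "(\<Sum>g\<in>G. (if g = g0 then 1 else 0::real)) = 1" using G g0 by simp
        show ?thesis
          by (intro CollectI exI[of _ "\<lambda>g. if g = g0 then 1 else 0"]) (use G g0 e1 e2 in auto)
      qed
    qed
    show "convex ?C"
    proof (rule convexI)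
      fix x y :: 'a and s t :: real
      assume x: "x \<in> ?C" and y: "y \<in> ?C" and st: "0 \<le> s" "0 \<le> t" "s + t = 1"
      obtain \<mu> where m: "(\<forall>g. 0 \<le> \<mu> g)" "(\<forall>g. g \<notin> G \<longrightarrow> \<mu> g = 0)" "sum \<mu> G \<le> 1" "x = (\<Sum>g\<in>G. \<mu> g *\<^sub>R v g)" using x by blast
      obtain \<nu> where n: "(\<forall>g. 0 \<le> \<nu> g)" "(\<forall>g. g \<notin> G \<longrightarrow> \<nu> g = 0)" "sum \<nu> G \<le> 1" "y = (\<Sum>g\<in>G. \<nu> g *\<^sub>R v g)" using y by blast
      have "sum (\<lambda>g. s * \<mu> g + t * \<nu> g) G = s * sum \<mu> G + t * sum \<nu> G"
        by (simp add: sum.distrib sum_distrib_left)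
      also have "\<dots> \<le> s * 1 + t * 1"
        using st m(3) n(3) by (intro add_mono mult_left_mono) auto
      finally have s1: "sum (\<lambda>g. s * \<mu> g + t * \<nu> g) G \<le> 1" using st by simp
      have "s *\<^sub>R x + t *\<^sub>R y = (\<Sum>g\<in>G. (s * \<mu> g + t * \<nu> g) *\<^sub>R v g)"
        by (simp add: m(4) n(4) scaleR_sum_right sum.distrib scaleR_add_left)
      then show "s *\<^sub>R x + t *\<^sub>R y \<in> ?C"
        using m n st s1 by (intro CollectI exI[of _ "\<lambda>g. s * \<mu> g + t * \<nu> g"]) auto
    qed
  qed
  then show ?thesis using zS by blast
qed


theorem theorem3p2:
  fixes h :: "nat \<Rightarrow> (real^'n) \<times> (real^'m) \<Rightarrow> ereal"
    and l p :: nat and xb :: "real^'n" and yb :: "real^'m"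
  assumes lp: "l \<le> p"
    and xb_dom: "xb \<in> domG (Gam h l p)"
    and yb_in: "yb \<in> Gam h l p xb"
    and smooth: "\<exists>U. open U \<and> {xb} \<times> Gam h l p xb \<subseteq> U \<and>
        (\<forall>i\<in>{1..p}. (\<forall>z\<in>U. h i z \<noteq> \<infinity> \<and> h i z \<noteq> -\<infinity>) \<and>
           continuous_on U (h i) \<and>
           (\<forall>x y. (x, y) \<in> U \<longrightarrow>
              ((\<lambda>y'. real_of_ereal (h i (x, y'))) has_derivative (\<lambda>v. ygrad (h i) x y \<bullet> v)) (at y)) \<and>
           continuous_on U (\<lambda>(x, y). ygrad (h i) x y))"
    and cont_y: "\<forall>x\<in>domG (Gam h l p). \<forall>i\<in>{1..p}.
        (\<forall>y. h i (x, y) \<noteq> \<infinity> \<and> h i (x, y) \<noteq> -\<infinity>) \<and>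
        continuous_on UNIV (\<lambda>y. real_of_ereal (h i (x, y)))"
    and A1: "\<forall>x. (\<forall>i\<in>{1..l}. ereal_convex (\<lambda>y. h i (x, y))) \<and>
                 (\<forall>i\<in>{l+1..p}. ereal_affine (\<lambda>y. h i (x, y)))"
    and A2: "locally_bounded_at (Gam h l p) xb"
  shows "R_regular h l p xb yb (domG (Gam h l p)) \<longleftrightarrow>
    (\<exists>M>0. \<forall>xs vs ys.
       (\<forall>k. xs k \<in> domG (Gam h l p)) \<and> xs \<longlonglongrightarrow> xb \<and> vs \<longlonglongrightarrow> yb \<and>
       (\<forall>k. vs k \<notin> Gam h l p (xs k)) \<and>
       (\<forall>k. ys k \<in> proj (vs k) (Gam h l p (xs k)))
       \<longrightarrow> (\<forall>\<^sub>F k in sequentially. LamM h l p M (vs k) (xs k) (ys k) \<noteq> {}))"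
proof -
  define \<Gamma> where "\<Gamma> = Gam h l p"
  define D where "D = domG \<Gamma>"
  define H where "H = (\<lambda>i x y. real_of_ereal (h i (x, y)))"
  define Rr where "Rr = (\<lambda>x y. Max (insert 0 ((\<lambda>i. H i x y) ` {1..l} \<union> (\<lambda>i. \<bar>H i x y\<bar>) ` {l+1..p})))"
  from smooth obtain U where U: "open U" "{xb} \<times> \<Gamma> xb \<subseteq> U"
    and Uall: "\<forall>i\<in>{1..p}. (\<forall>z\<in>U. h i z \<noteq> \<infinity> \<and> h i z \<noteq> -\<infinity>) \<and>
           continuous_on U (h i) \<and>
           (\<forall>x y. (x, y) \<in> U \<longrightarrow>
              ((\<lambda>y'. real_of_ereal (h i (x, y'))) has_derivative (\<lambda>v. ygrad (h i) x y \<bullet> v)) (at y)) \<and>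
           continuous_on U (\<lambda>(x, y). ygrad (h i) x y)"
    unfolding \<Gamma>_def by blast
  have Ufin: "\<And>i z. i \<in> {1..p} \<Longrightarrow> z \<in> U \<Longrightarrow> h i z \<noteq> \<infinity> \<and> h i z \<noteq> -\<infinity>"
    using Uall by blast
  have Ucont: "\<And>i. i \<in> {1..p} \<Longrightarrow> continuous_on U (h i)"
    using Uall by blast
  have Uder: "\<And>i x y. i \<in> {1..p} \<Longrightarrow> (x, y) \<in> U \<Longrightarrow> ((H i x) has_derivative (\<lambda>v. ygrad (h i) x y \<bullet> v)) (at y)"
  proof -
    fix i x y assume "i \<in> {1..p}" "(x, y) \<in> U"
    then have "((\<lambda>y'. real_of_ereal (h i (x, y'))) has_derivative (\<lambda>v. ygrad (h i) x y \<bullet> v)) (at y)"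
      using Uall by blast
    then show "((H i x) has_derivative (\<lambda>v. ygrad (h i) x y \<bullet> v)) (at y)" by (simp add: H_def)
  qed
  have Dfin: "\<And>i x y. x \<in> D \<Longrightarrow> i \<in> {1..p} \<Longrightarrow> h i (x, y) = ereal (H i x y)"
  proof -
    fix i x y assume "x \<in> D" "i \<in> {1..p}"
    then have "h i (x, y) \<noteq> \<infinity> \<and> h i (x, y) \<noteq> -\<infinity>" using cont_y unfolding D_def \<Gamma>_def by blast
    then show "h i (x, y) = ereal (H i x y)" unfolding H_def by (cases "h i (x, y)") auto
  qed
  have Dcont: "\<And>i x. x \<in> D \<Longrightarrow> i \<in> {1..p} \<Longrightarrow> continuous_on UNIV (H i x)"
  proof -
    fix i x assume "x \<in> D" "i \<in> {1..p}"
    then have "continuous_on UNIV (\<lambda>y. real_of_ereal (h i (x, y)))" using cont_y unfolding D_def \<Gamma>_def by blast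
    then show "continuous_on UNIV (H i x)" unfolding H_def by simp
  qed
  have Ufin': "\<And>i x y. (x, y) \<in> U \<Longrightarrow> i \<in> {1..p} \<Longrightarrow> h i (x, y) = ereal (H i x y)"
  proof -
    fix i x y assume "(x, y) \<in> U" "i \<in> {1..p}"
    then have "h i (x, y) \<noteq> \<infinity> \<and> h i (x, y) \<noteq> -\<infinity>" using Ufin by blast
    then show "h i (x, y) = ereal (H i x y)" unfolding H_def by (cases "h i (x, y)") auto
  qed
  have Ucont': "\<And>i. i \<in> {1..p} \<Longrightarrow> continuous_on U (\<lambda>z. H i (fst z) (snd z))"
  proof -
    fix i assume i: "i \<in> {1..p}"
    have fz: "\<And>z. z \<in> U \<Longrightarrow> \<bar>h i z\<bar> \<noteq> \<infinity>"
    proof -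
      fix z assume "z \<in> U"
      then have "h i z \<noteq> \<infinity> \<and> h i z \<noteq> -\<infinity>" using Ufin i by blast
      then show "\<bar>h i z\<bar> \<noteq> \<infinity>" by (cases "h i z") auto
    qed
    have "continuous_on U (real_of_ereal \<circ> h i)"
      using continuous_on_iff_real[of U "h i", OF fz] Ucont[OF i] by blast
    then show "continuous_on U (\<lambda>z. H i (fst z) (snd z))" by (simp add: H_def o_def)
  qed
  have Iin: "{1..l} \<subseteq> {1..p}" "{l+1..p} \<subseteq> {1..p}" using lp by auto
  have gam_iff: "\<And>x y. (\<And>i. i \<in> {1..p} \<Longrightarrow> h i (x, y) = ereal (H i x y)) \<Longrightarrow>
      y \<in> \<Gamma> x \<longleftrightarrow> (\<forall>i\<in>{1..l}. H i x y \<le> 0) \<and> (\<forall>i\<in>{l+1..p}. H i x y = 0)"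
  proof -
    fix x y assume f: "\<And>i. i \<in> {1..p} \<Longrightarrow> h i (x, y) = ereal (H i x y)"
    show "y \<in> \<Gamma> x \<longleftrightarrow> (\<forall>i\<in>{1..l}. H i x y \<le> 0) \<and> (\<forall>i\<in>{l+1..p}. H i x y = 0)"
      unfolding \<Gamma>_def Gam_def using f Iin by (auto simp: subset_iff zero_ereal_def)
  qed
  have Rr_ge: "\<And>x y. 0 \<le> Rr x y \<and> (\<forall>i\<in>{1..l}. H i x y \<le> Rr x y) \<and> (\<forall>i\<in>{l+1..p}. \<bar>H i x y\<bar> \<le> Rr x y)"
    unfolding Rr_def by (intro conjI ballI Max_ge) auto
  have Rr_le: "\<And>x y c. 0 \<le> c \<Longrightarrow> (\<forall>i\<in>{1..l}. H i x y \<le> c) \<Longrightarrow> (\<forall>i\<in>{l+1..p}. \<bar>H i x y\<bar> \<le> c) \<Longrightarrow> Rr x y \<le> c"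
    unfolding Rr_def by (auto intro!: Max.boundedI)
  have resid_eq: "\<And>x y. (\<And>i. i \<in> {1..p} \<Longrightarrow> h i (x, y) = ereal (H i x y)) \<Longrightarrow> resid h l p x y = ereal (Rr x y)"
  proof -
    fix x y assume f: "\<And>i. i \<in> {1..p} \<Longrightarrow> h i (x, y) = ereal (H i x y)"
    have "ereal (Rr x y) = Max (ereal ` (insert 0 ((\<lambda>i. H i x y) ` {1..l} \<union> (\<lambda>i. \<bar>H i x y\<bar>) ` {l+1..p})))"
      unfolding Rr_def by (rule mono_Max_commute) (auto simp: mono_def)
    also have "ereal ` (insert 0 ((\<lambda>i. H i x y) ` {1..l} \<union> (\<lambda>i. \<bar>H i x y\<bar>) ` {l+1..p}))
       = insert 0 ((\<lambda>i. h i (x, y)) ` {1..l} \<union> (\<lambda>i. \<bar>h i (x, y)\<bar>) ` {l+1..p})"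
      using f Iin by (auto simp: image_iff zero_ereal_def subset_iff)
    finally show "resid h l p x y = ereal (Rr x y)" unfolding resid_def by simp
  qed
  have cvx: "\<And>x i t a b. x \<in> D \<Longrightarrow> i \<in> {1..l} \<Longrightarrow> 0 \<le> (t::real) \<Longrightarrow> t \<le> 1 \<Longrightarrow>
      H i x ((1 - t) *\<^sub>R a + t *\<^sub>R b) \<le> (1 - t) * H i x a + t * H i x b"
  proof -
    fix x i and t :: real and a b :: "real^'m" assume x: "x \<in> D" and i: "i \<in> {1..l}" and t: "0 \<le> t" "t \<le> 1"
    have "\<And>y. \<bar>h i (x, y)\<bar> \<noteq> \<infinity>" using Dfin[OF x] Iin i by auto
    then show "H i x ((1 - t) *\<^sub>R a + t *\<^sub>R b) \<le> (1 - t) * H i x a + t * H i x b"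
      using conv_ereal[of "\<lambda>y. h i (x, y)" t a b] A1 i t unfolding H_def by auto
  qed
  have aff: "\<And>x i t a b. i \<in> {l+1..p} \<Longrightarrow>
      H i x ((1 - (t::real)) *\<^sub>R a + t *\<^sub>R b) = (1 - t) * H i x a + t * H i x b"
    using A1 aff_ereal(2) unfolding H_def by blast
  have Gconv: "\<And>x. x \<in> D \<Longrightarrow> convex (\<Gamma> x)"
  proof -
    fix x assume x: "x \<in> D"
    show "convex (\<Gamma> x)"
    proof (rule convexI)
      fix a b :: "real^'m" and s t :: real
      assume a: "a \<in> \<Gamma> x" and b: "b \<in> \<Gamma> x" and st: "0 \<le> s" "0 \<le> t" "s + t = 1"
      have s: "s = 1 - t" using st by simp
      have ra: "(\<forall>i\<in>{1..l}. H i x a \<le> 0) \<and> (\<forall>i\<in>{l+1..p}. H i x a = 0)"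
        using a gam_iff Dfin[OF x] by blast
      have rb: "(\<forall>i\<in>{1..l}. H i x b \<le> 0) \<and> (\<forall>i\<in>{l+1..p}. H i x b = 0)"
        using b gam_iff Dfin[OF x] by blast
      have "(\<forall>i\<in>{1..l}. H i x ((1 - t) *\<^sub>R a + t *\<^sub>R b) \<le> 0) \<and> (\<forall>i\<in>{l+1..p}. H i x ((1 - t) *\<^sub>R a + t *\<^sub>R b) = 0)"
      proof (intro conjI ballI)
        fix i assume i: "i \<in> {1..l}"
        have "H i x ((1 - t) *\<^sub>R a + t *\<^sub>R b) \<le> (1 - t) * H i x a + t * H i x b"
          using cvx[OF x i] st by simp
        also have "\<dots> \<le> 0" using ra rb i st s
          by (metis add_nonpos_nonpos mult_nonneg_nonpos)
        finally show "H i x ((1 - t) *\<^sub>R a + t *\<^sub>R b) \<le> 0" .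
      next
        fix i assume i: "i \<in> {l+1..p}"
        show "H i x ((1 - t) *\<^sub>R a + t *\<^sub>R b) = 0" using aff[OF i] ra rb i by simp
      qed
      then show "s *\<^sub>R a + t *\<^sub>R b \<in> \<Gamma> x" using gam_iff Dfin[OF x] s by blast
    qed
  qed
  have Gclosed: "\<And>x. x \<in> D \<Longrightarrow> closed (\<Gamma> x)"
  proof -
    fix x assume x: "x \<in> D"
    have "\<Gamma> x = (\<Inter>i\<in>{1..l}. {y. H i x y \<le> 0}) \<inter> (\<Inter>i\<in>{l+1..p}. {y. H i x y = 0})"
      using gam_iff Dfin[OF x] by auto
    moreover have "closed ((\<Inter>i\<in>{1..l}. {y. H i x y \<le> 0}) \<inter> (\<Inter>i\<in>{l+1..p}. {y. H i x y = 0}))"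
      using Dcont[OF x] Iin
      by (intro closed_Int closed_INT ballI closed_Collect_le closed_Collect_eq) (auto simp: continuous_on_const)
    ultimately show "closed (\<Gamma> x)" by simp
  qed
  have Gne: "\<And>x. x \<in> D \<Longrightarrow> \<Gamma> x \<noteq> {}" unfolding D_def domG_def by simp
  have xbD: "xb \<in> D" using xb_dom unfolding D_def \<Gamma>_def .
  have ybG: "yb \<in> \<Gamma> xb" using yb_in unfolding \<Gamma>_def .
  have Q: "\<And>x y \<nu> lam M. x \<in> D \<Longrightarrow> (x, y) \<in> U \<Longrightarrow> \<nu> \<notin> \<Gamma> x \<Longrightarrow> y \<in> proj \<nu> (\<Gamma> x) \<Longrightarrow>
      lam \<in> LamM h l p M \<nu> x y \<Longrightarrow> norm (y - \<nu>) \<le> M * Rr x \<nu>"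
  proof -
    fix x y \<nu> lam M assume x: "x \<in> D" and xyU: "(x, y) \<in> U" and nv: "\<nu> \<notin> \<Gamma> x"
      and yp: "y \<in> proj \<nu> (\<Gamma> x)" and lam: "lam \<in> LamM h l p M \<nu> x y"
    define g where "g = (\<lambda>i. ygrad (h i) x y)"
    have yG: "y \<in> \<Gamma> x" using yp by (simp add: proj_def)
    have ny: "y \<noteq> \<nu>" using yG nv by auto
    have Ly: "(\<forall>i\<in>{1..l}. H i x y \<le> 0) \<and> (\<forall>i\<in>{l+1..p}. H i x y = 0)"
      using yG gam_iff Dfin[OF x] by blast
    have eq: "(1 / norm (y - \<nu>)) *\<^sub>R (y - \<nu>) + (\<Sum>i=1..p. lam i *\<^sub>R g i) = 0"
      and lamI: "\<forall>i\<in>{1..l}. lam i \<ge> 0 \<and> ereal (lam i) * h i (x, y) = 0"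
      and sumM: "(\<Sum>i=1..p. \<bar>lam i\<bar>) \<le> M"
      using lam unfolding LamM_def Lam_def g_def by auto
    have der: "\<And>i. i \<in> {1..p} \<Longrightarrow> ((H i x) has_derivative (\<lambda>v. g i \<bullet> v)) (at y)"
      using Uder xyU unfolding g_def by blast
    have comp: "\<And>i. i \<in> {1..l} \<Longrightarrow> lam i * H i x y = 0"
    proof -
      fix i assume i: "i \<in> {1..l}"
      then have "ereal (lam i) * ereal (H i x y) = 0" using lamI Dfin[OF x, of i y] Iin by auto
      then show "lam i * H i x y = 0" by (simp add: zero_ereal_def)
    qed
    have gI: "\<And>i. i \<in> {1..p} \<Longrightarrow> (\<And>t. 0 < t \<Longrightarrow> t < 1 \<Longrightarrow> H i x (y + t *\<^sub>R (\<nu> - y)) \<le> (1 - t) * H i x y + t * H i x \<nu>)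
        \<Longrightarrow> g i \<bullet> (\<nu> - y) \<le> H i x \<nu> - H i x y"
    proof -
      fix i assume i: "i \<in> {1..p}" and c: "\<And>t. 0 < t \<Longrightarrow> t < 1 \<Longrightarrow> H i x (y + t *\<^sub>R (\<nu> - y)) \<le> (1 - t) * H i x y + t * H i x \<nu>"
      have "g i \<bullet> (\<nu> - y) \<le> H i x (y + (\<nu> - y)) - H i x y"
        by (rule grad_ineq[OF der[OF i]]) (use c in simp)
      then show "g i \<bullet> (\<nu> - y) \<le> H i x \<nu> - H i x y" by simp
    qed
    have seg: "\<And>t::real. y + t *\<^sub>R (\<nu> - y) = (1 - t) *\<^sub>R y + t *\<^sub>R \<nu>" by (simp add: algebra_simps)
    have termi: "\<And>i. i \<in> {1..p} \<Longrightarrow> lam i * (g i \<bullet> (\<nu> - y)) \<le> \<bar>lam i\<bar> * Rr x \<nu>"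
    proof -
      fix i assume i: "i \<in> {1..p}"
      show "lam i * (g i \<bullet> (\<nu> - y)) \<le> \<bar>lam i\<bar> * Rr x \<nu>"
      proof (cases "i \<le> l")
        case True
        then have iI: "i \<in> {1..l}" using i by auto
        have "g i \<bullet> (\<nu> - y) \<le> H i x \<nu> - H i x y"
          by (rule gI[OF i]) (use cvx[OF x iI] seg in simp)
        then have "lam i * (g i \<bullet> (\<nu> - y)) \<le> lam i * (H i x \<nu> - H i x y)"
          using lamI iI by (intro mult_left_mono) auto
        also have "\<dots> = lam i * H i x \<nu>" using comp[OF iI] by (simp add: algebra_simps)
        also have "\<dots> \<le> lam i * Rr x \<nu>" using lamI iI Rr_ge by (intro mult_left_mono) auto
        finally show ?thesis using lamI iI by simp
      next
        case False
        then have iJ: "i \<in> {l+1..p}" using i by auto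
        have a1: "g i \<bullet> (\<nu> - y) \<le> H i x \<nu> - H i x y"
          by (rule gI[OF i]) (use aff[OF iJ] seg in simp)
        have dm: "((\<lambda>z. - H i x z) has_derivative (\<lambda>v. (- g i) \<bullet> v)) (at y)"
          using has_derivative_minus[OF der[OF i]] by simp
        have "(- g i) \<bullet> (\<nu> - y) \<le> - H i x (y + (\<nu> - y)) - (- H i x y)"
          by (rule grad_ineq[OF dm]) (use aff[OF iJ] seg in \<open>simp add: algebra_simps\<close>)
        then have a2: "H i x \<nu> - H i x y \<le> g i \<bullet> (\<nu> - y)" by simp
        have "lam i * (g i \<bullet> (\<nu> - y)) = lam i * H i x \<nu>" using a1 a2 Ly iJ by simp
        also have "\<dots> \<le> \<bar>lam i\<bar> * \<bar>H i x \<nu>\<bar>" by (simp add: abs_mult[symmetric])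
        also have "\<dots> \<le> \<bar>lam i\<bar> * Rr x \<nu>" using Rr_ge iJ by (intro mult_left_mono) auto
        finally show ?thesis .
      qed
    qed
    have sg: "(\<Sum>i=1..p. lam i *\<^sub>R g i) = (1 / norm (y - \<nu>)) *\<^sub>R (\<nu> - y)"
      using eq by (simp add: eq_neg_iff_add_eq_0[symmetric] algebra_simps)
    have nn: "norm (y - \<nu>) > 0" using ny by simp
    have "(\<Sum>i=1..p. lam i *\<^sub>R g i) \<bullet> (\<nu> - y) = (1 / norm (y - \<nu>)) * ((\<nu> - y) \<bullet> (\<nu> - y))"
      by (simp only: sg inner_scaleR_left)
    also have "\<dots> = (1 / norm (y - \<nu>)) * (norm (y - \<nu>))\<^sup>2"
      by (simp add: dot_square_norm norm_minus_commute)
    also have "\<dots> = norm (y - \<nu>)" using nn by (simp add: power2_eq_square)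
    finally have "norm (y - \<nu>) = (\<Sum>i=1..p. lam i *\<^sub>R g i) \<bullet> (\<nu> - y)" by simp
    also have "\<dots> = (\<Sum>i=1..p. lam i * (g i \<bullet> (\<nu> - y)))" by (simp add: inner_sum_left)
    also have "\<dots> \<le> (\<Sum>i=1..p. \<bar>lam i\<bar> * Rr x \<nu>)" by (rule sum_mono) (rule termi)
    also have "\<dots> = (\<Sum>i=1..p. \<bar>lam i\<bar>) * Rr x \<nu>" by (simp add: sum_distrib_right)
    also have "\<dots> \<le> M * Rr x \<nu>" using sumM Rr_ge by (intro mult_right_mono) auto
    finally show "norm (y - \<nu>) \<le> M * Rr x \<nu>" .
  qed
  have P: "\<And>x y \<nu> \<kappa> UR. \<kappa> > 0 \<Longrightarrow> open UR \<Longrightarrow>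
      (\<forall>x' y'. (x', y') \<in> UR \<and> x' \<in> D \<longrightarrow> infdist y' (\<Gamma> x') \<le> \<kappa> * Rr x' y') \<Longrightarrow>
      x \<in> D \<Longrightarrow> (x, y) \<in> U \<Longrightarrow> (x, y) \<in> UR \<Longrightarrow> \<nu> \<notin> \<Gamma> x \<Longrightarrow> y \<in> proj \<nu> (\<Gamma> x) \<Longrightarrow>
      LamM h l p \<kappa> \<nu> x y \<noteq> {}"
  proof -
    fix x y \<nu> \<kappa> UR assume kp: "\<kappa> > 0" and URo: "open UR"
      and EB: "\<forall>x' y'. (x', y') \<in> UR \<and> x' \<in> D \<longrightarrow> infdist y' (\<Gamma> x') \<le> \<kappa> * Rr x' y'"
      and x: "x \<in> D" and xyU: "(x, y) \<in> U" and xyR: "(x, y) \<in> UR" and nv: "\<nu> \<notin> \<Gamma> x"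
      and yp: "y \<in> proj \<nu> (\<Gamma> x)"
    define g where "g = (\<lambda>i. ygrad (h i) x y)"
    have yG: "y \<in> \<Gamma> x" using yp by (simp add: proj_def)
    have ny: "y \<noteq> \<nu>" using yG nv by auto
    have nn: "norm (\<nu> - y) > 0" using ny by simp
    have Ly: "(\<forall>i\<in>{1..l}. H i x y \<le> 0) \<and> (\<forall>i\<in>{l+1..p}. H i x y = 0)"
      using yG gam_iff Dfin[OF x] by blast
    have der: "\<And>i. i \<in> {1..p} \<Longrightarrow> ((H i x) has_derivative (\<lambda>v. g i \<bullet> v)) (at y)"
      using Uder xyU unfolding g_def by blast
    define u where "u = (1 / norm (\<nu> - y)) *\<^sub>R (\<nu> - y)"
    have nu: "norm u = 1" using nn by (simp add: u_def)
    have normal: "\<And>w. w \<in> \<Gamma> x \<Longrightarrow> (\<nu> - y) \<bullet> (w - y) \<le> 0"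
    proof -
      fix w assume w: "w \<in> \<Gamma> x"
      have "\<forall>z\<in>\<Gamma> x. dist \<nu> y \<le> dist \<nu> z"
        using yp by (auto simp: proj_def dist_norm norm_minus_commute)
      then show "(\<nu> - y) \<bullet> (w - y) \<le> 0"
        using any_closest_point_dot[OF Gconv[OF x] Gclosed[OF x] yG w] by blast
    qed
    have lower: "\<And>z. u \<bullet> (z - y) \<le> infdist z (\<Gamma> x)"
    proof -
      fix z
      obtain w where w: "w \<in> \<Gamma> x" "infdist z (\<Gamma> x) = dist z w"
        using infdist_attains_inf[OF Gclosed[OF x] Gne[OF x]] by metis
      have "u \<bullet> (w - y) \<le> 0" using normal[OF w(1)] nn by (simp add: u_def divide_nonpos_pos)
      moreover have "u \<bullet> (z - w) \<le> norm u * norm (z - w)" by (rule norm_cauchy_schwarz)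
      moreover have "u \<bullet> (z - y) = u \<bullet> (z - w) + u \<bullet> (w - y)" by (simp add: inner_diff_right)
      ultimately show "u \<bullet> (z - y) \<le> infdist z (\<Gamma> x)" using w(2) nu by (simp add: dist_norm)
    qed
    define A where "A = {i\<in>{1..l}. H i x y = 0}"
    define G where "G = {(i, s). i \<in> {1..p} \<and> ((i \<in> A \<and> s) \<or> i \<in> {l+1..p})}"
    define vv where "vv = (\<lambda>(i, s). if s then g i else - g i)"
    have GB: "G \<subseteq> {1..p} \<times> (UNIV :: bool set)" unfolding G_def by auto
    have finB: "finite ({1..p} \<times> (UNIV :: bool set))" by simp
    have finG: "finite G" using GB finB by (rule finite_subset)
    define \<phi> where "\<phi> = (\<lambda>d. Max (insert 0 ((\<lambda>\<gamma>. vv \<gamma> \<bullet> d) ` G)))"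
    have \<phi>ge: "\<And>d \<gamma>. \<gamma> \<in> G \<Longrightarrow> vv \<gamma> \<bullet> d \<le> \<phi> d" unfolding \<phi>_def using finG by (intro Max_ge) auto
    have \<phi>0: "\<And>d. 0 \<le> \<phi> d" unfolding \<phi>_def using finG by (intro Max_ge) auto
    have key: "\<And>d. ((1 / \<kappa>) *\<^sub>R u) \<bullet> d \<le> \<phi> d"
    proof (rule ccontr)
      fix d assume "\<not> ((1 / \<kappa>) *\<^sub>R u) \<bullet> d \<le> \<phi> d"
      then have gt: "\<phi> d < (u \<bullet> d) / \<kappa>" by simp
      define \<epsilon> where "\<epsilon> = ((u \<bullet> d) / \<kappa> - \<phi> d) / 2"
      have ep: "\<epsilon> > 0" using gt by (simp add: \<epsilon>_def)
      have E1: "eventually (\<lambda>t. (x, y + t *\<^sub>R d) \<in> UR) (at_right 0)"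
      proof -
        have "((\<lambda>t. (x, y + t *\<^sub>R d)) \<longlongrightarrow> (x, y + 0 *\<^sub>R d)) (at_right (0::real))"
          by (intro tendsto_intros)
        then show ?thesis using topological_tendstoD[OF _ URo] xyR by simp
      qed
      have E2: "eventually (\<lambda>t. \<forall>i\<in>{1..p}. 0 < t \<and> \<bar>H i x (y + t *\<^sub>R d) - H i x y - t * (g i \<bullet> d)\<bar> \<le> t * \<epsilon>) (at_right 0)"
        by (rule eventually_ball_finite) (use deriv_bound[OF der ep] in auto)
      have E3: "eventually (\<lambda>t. \<forall>i\<in>{1..l} - A. H i x (y + t *\<^sub>R d) < 0) (at_right 0)"
      proof (rule eventually_ball_finite)
        show "finite ({1..l} - A)" by simp
        show "\<forall>i\<in>{1..l} - A. eventually (\<lambda>t. H i x (y + t *\<^sub>R d) < 0) (at_right 0)"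
        proof
          fix i assume i: "i \<in> {1..l} - A"
          then have neg: "H i x y < 0" using Ly unfolding A_def by force
          have "continuous_on UNIV (H i x)" using Dcont[OF x] i Iin by auto
          moreover have "((\<lambda>t. y + t *\<^sub>R d) \<longlongrightarrow> y + 0 *\<^sub>R d) (at_right (0::real))"
            by (intro tendsto_intros)
          ultimately have "((\<lambda>t. H i x (y + t *\<^sub>R d)) \<longlongrightarrow> H i x y) (at_right 0)"
            using continuous_on_tendsto_compose[of UNIV "H i x"] by (simp add: o_def)
          then show "eventually (\<lambda>t. H i x (y + t *\<^sub>R d) < 0) (at_right 0)"
            using order_tendstoD(2)[OF _ neg] by blast
        qed
      qed
      have "eventually (\<lambda>t. (x, y + t *\<^sub>R d) \<in> UR \<and> (\<forall>i\<in>{1..p}. 0 < t \<and> \<bar>H i x (y + t *\<^sub>R d) - H i x y - t * (g i \<bullet> d)\<bar> \<le> t * \<epsilon>)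
          \<and> (\<forall>i\<in>{1..l} - A. H i x (y + t *\<^sub>R d) < 0)) (at_right 0)"
        using eventually_conj[OF E1 eventually_conj[OF E2 E3]] by simp
      then have "eventually (\<lambda>t. 0 < t \<and> (x, y + t *\<^sub>R d) \<in> UR \<and> (\<forall>i\<in>{1..p}. 0 < t \<and> \<bar>H i x (y + t *\<^sub>R d) - H i x y - t * (g i \<bullet> d)\<bar> \<le> t * \<epsilon>)
          \<and> (\<forall>i\<in>{1..l} - A. H i x (y + t *\<^sub>R d) < 0)) (at_right 0)"
        using eventually_conj[OF eventually_at_right_less] by blast
      then have "\<exists>t. 0 < t \<and> (x, y + t *\<^sub>R d) \<in> UR \<and> (\<forall>i\<in>{1..p}. 0 < t \<and> \<bar>H i x (y + t *\<^sub>R d) - H i x y - t * (g i \<bullet> d)\<bar> \<le> t * \<epsilon>)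
          \<and> (\<forall>i\<in>{1..l} - A. H i x (y + t *\<^sub>R d) < 0)"
        by (rule eventually_happens'[OF trivial_limit_at_right_real])
      then obtain t where tp: "0 < t" and t1: "(x, y + t *\<^sub>R d) \<in> UR"
        and t2: "\<forall>i\<in>{1..p}. 0 < t \<and> \<bar>H i x (y + t *\<^sub>R d) - H i x y - t * (g i \<bullet> d)\<bar> \<le> t * \<epsilon>"
        and t3: "\<forall>i\<in>{1..l} - A. H i x (y + t *\<^sub>R d) < 0"
        by blast
      have bnd: "Rr x (y + t *\<^sub>R d) \<le> t * (\<phi> d + \<epsilon>)"
      proof (rule Rr_le)
        show "0 \<le> t * (\<phi> d + \<epsilon>)" using tp \<phi>0[of d] ep by simp
        show "\<forall>i\<in>{1..l}. H i x (y + t *\<^sub>R d) \<le> t * (\<phi> d + \<epsilon>)"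
        proof
          fix i assume i: "i \<in> {1..l}"
          show "H i x (y + t *\<^sub>R d) \<le> t * (\<phi> d + \<epsilon>)"
          proof (cases "i \<in> A")
            case True
            then have h0: "H i x y = 0" by (simp add: A_def)
            have "(i, True) \<in> G" using True i Iin unfolding G_def A_def by auto
            then have "g i \<bullet> d \<le> \<phi> d" using \<phi>ge[of "(i, True)" d] by (simp add: vv_def)
            then have m: "t * (g i \<bullet> d) \<le> t * \<phi> d" using tp by (intro mult_left_mono) auto
            have "\<bar>H i x (y + t *\<^sub>R d) - H i x y - t * (g i \<bullet> d)\<bar> \<le> t * \<epsilon>" using t2 i Iin by auto
            then show ?thesis using h0 m by (simp add: abs_le_iff distrib_left)
          next
            case False
            then have "H i x (y + t *\<^sub>R d) < 0" using t3 i by auto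
            moreover have "0 \<le> t * (\<phi> d + \<epsilon>)" using tp \<phi>0[of d] ep by simp
            ultimately show ?thesis by simp
          qed
        qed
        show "\<forall>i\<in>{l+1..p}. \<bar>H i x (y + t *\<^sub>R d)\<bar> \<le> t * (\<phi> d + \<epsilon>)"
        proof
          fix i assume i: "i \<in> {l+1..p}"
          have h0: "H i x y = 0" using Ly i by auto
          have "(i, True) \<in> G" "(i, False) \<in> G" using i unfolding G_def by auto
          then have "g i \<bullet> d \<le> \<phi> d" "- (g i \<bullet> d) \<le> \<phi> d"
            using \<phi>ge[of "(i, True)" d] \<phi>ge[of "(i, False)" d] by (simp_all add: vv_def)
          then have m: "t * (g i \<bullet> d) \<le> t * \<phi> d" "t * (- (g i \<bullet> d)) \<le> t * \<phi> d"
            using tp by (intro mult_left_mono; simp)+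
          have "\<bar>H i x (y + t *\<^sub>R d) - H i x y - t * (g i \<bullet> d)\<bar> \<le> t * \<epsilon>" using t2 i Iin by auto
          then show "\<bar>H i x (y + t *\<^sub>R d)\<bar> \<le> t * (\<phi> d + \<epsilon>)" using h0 m by (simp add: abs_le_iff distrib_left)
        qed
      qed
      have "t * (u \<bullet> d) = u \<bullet> ((y + t *\<^sub>R d) - y)" by simp
      also have "\<dots> \<le> infdist (y + t *\<^sub>R d) (\<Gamma> x)" by (rule lower)
      also have "\<dots> \<le> \<kappa> * Rr x (y + t *\<^sub>R d)" using EB t1 x by blast
      also have "\<dots> \<le> \<kappa> * (t * (\<phi> d + \<epsilon>))" using bnd kp by (intro mult_left_mono) auto
      finally have "t * (u \<bullet> d) \<le> t * (\<kappa> * (\<phi> d + \<epsilon>))" by (simp add: algebra_simps)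
      then have "u \<bullet> d \<le> \<kappa> * (\<phi> d + \<epsilon>)" using tp by simp
      moreover have "u \<bullet> d = \<kappa> * (\<phi> d + 2 * \<epsilon>)" using kp by (simp add: \<epsilon>_def field_simps)
      ultimately show False using kp ep by (simp add: algebra_simps)
    qed
    obtain \<mu> where \<mu>: "\<forall>\<gamma>. 0 \<le> \<mu> \<gamma>" "\<forall>\<gamma>. \<gamma> \<notin> G \<longrightarrow> \<mu> \<gamma> = 0" "sum \<mu> G \<le> 1"
      "(1 / \<kappa>) *\<^sub>R u = (\<Sum>\<gamma>\<in>G. \<mu> \<gamma> *\<^sub>R vv \<gamma>)"
      using farkas_hull[OF finG, of "(1 / \<kappa>) *\<^sub>R u" vv] key unfolding \<phi>_def by blast
    define lam where "lam = (\<lambda>i. if i \<in> {1..p} then \<kappa> * (\<mu> (i, True) - \<mu> (i, False)) else 0)"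
    have noF: "\<And>i. i \<in> {1..l} \<Longrightarrow> \<mu> (i, False) = 0" using \<mu>(2) unfolding G_def by auto
    have noT: "\<And>i. i \<in> {1..l} \<Longrightarrow> i \<notin> A \<Longrightarrow> \<mu> (i, True) = 0" using \<mu>(2) unfolding G_def by auto
    have sumB: "(\<Sum>\<gamma>\<in>G. \<mu> \<gamma> *\<^sub>R vv \<gamma>) = (\<Sum>\<gamma>\<in>{1..p} \<times> (UNIV :: bool set). \<mu> \<gamma> *\<^sub>R vv \<gamma>)"
      by (rule sum.mono_neutral_left[OF finB GB]) (use \<mu>(2) in auto)
    have sumB': "sum \<mu> G = (\<Sum>\<gamma>\<in>{1..p} \<times> (UNIV :: bool set). \<mu> \<gamma>)"
      by (rule sum.mono_neutral_left[OF finB GB]) (use \<mu>(2) in auto)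
    have split: "\<And>F :: nat \<times> bool \<Rightarrow> 'z::comm_monoid_add. (\<Sum>\<gamma>\<in>{1..p} \<times> (UNIV :: bool set). F \<gamma>) = (\<Sum>i=1..p. F (i, True) + F (i, False))"
    proof -
      fix F :: "nat \<times> bool \<Rightarrow> 'z::comm_monoid_add"
      have "(\<Sum>i=1..p. \<Sum>s\<in>(UNIV :: bool set). F (i, s)) = (\<Sum>\<gamma>\<in>{1..p} \<times> (UNIV :: bool set). F \<gamma>)"
        unfolding sum.cartesian_product by simp
      moreover have "(\<Sum>i=1..p. \<Sum>s\<in>(UNIV :: bool set). F (i, s)) = (\<Sum>i=1..p. F (i, True) + F (i, False))"
        by (simp add: UNIV_bool add.commute)
      ultimately show "(\<Sum>\<gamma>\<in>{1..p} \<times> (UNIV :: bool set). F \<gamma>) = (\<Sum>i=1..p. F (i, True) + F (i, False))" by simp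
    qed
    have S: "(\<Sum>i=1..p. lam i *\<^sub>R g i) = u"
    proof -
      have "(\<Sum>i=1..p. lam i *\<^sub>R g i) = \<kappa> *\<^sub>R (\<Sum>i=1..p. \<mu> (i, True) *\<^sub>R vv (i, True) + \<mu> (i, False) *\<^sub>R vv (i, False))"
        unfolding scaleR_sum_right by (rule sum.cong) (auto simp: lam_def vv_def algebra_simps)
      also have "\<dots> = \<kappa> *\<^sub>R (\<Sum>\<gamma>\<in>G. \<mu> \<gamma> *\<^sub>R vv \<gamma>)" by (simp only: sumB split)
      also have "\<dots> = u" using kp by (simp add: \<mu>(4)[symmetric])
      finally show ?thesis .
    qed
    have eq: "(1 / norm (y - \<nu>)) *\<^sub>R (y - \<nu>) + (\<Sum>i=1..p. lam i *\<^sub>R ygrad (h i) x y) = 0"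
    proof -
      have "(\<Sum>i=1..p. lam i *\<^sub>R ygrad (h i) x y) = u" using S by (simp add: g_def)
      moreover have "(1 / norm (y - \<nu>)) *\<^sub>R (y - \<nu>) = - u"
        by (simp add: u_def norm_minus_commute[of y] scaleR_minus_right[symmetric])
      ultimately show ?thesis by simp
    qed
    have I: "\<forall>i\<in>{1..l}. lam i \<ge> 0 \<and> ereal (lam i) * h i (x, y) = 0"
    proof
      fix i assume i: "i \<in> {1..l}"
      have ip: "i \<in> {1..p}" using i Iin by auto
      have l1: "lam i = \<kappa> * \<mu> (i, True)" using noF[OF i] ip by (simp add: lam_def)
      show "lam i \<ge> 0 \<and> ereal (lam i) * h i (x, y) = 0"
      proof (cases "i \<in> A")
        case True
        then have "h i (x, y) = 0" using Dfin[OF x ip, of y] by (simp add: A_def zero_ereal_def)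
        then show ?thesis using l1 \<mu>(1) kp by simp
      next
        case False
        then show ?thesis using l1 noT[OF i] Dfin[OF x ip, of y] by simp
      qed
    qed
    have sabs: "(\<Sum>i=1..p. \<bar>lam i\<bar>) \<le> \<kappa>"
    proof -
      have "(\<Sum>i=1..p. \<bar>lam i\<bar>) \<le> (\<Sum>i=1..p. \<kappa> * (\<mu> (i, True) + \<mu> (i, False)))"
      proof (rule sum_mono)
        fix i assume "i \<in> {1..p}"
        then have "\<bar>lam i\<bar> = \<kappa> * \<bar>\<mu> (i, True) - \<mu> (i, False)\<bar>" using kp by (simp add: lam_def abs_mult)
        also have "\<dots> \<le> \<kappa> * (\<mu> (i, True) + \<mu> (i, False))" using kp \<mu>(1)
          by (intro mult_left_mono) (auto simp: abs_le_iff)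
        finally show "\<bar>lam i\<bar> \<le> \<kappa> * (\<mu> (i, True) + \<mu> (i, False))" .
      qed
      also have "\<dots> = \<kappa> * (\<Sum>i=1..p. \<mu> (i, True) + \<mu> (i, False))" by (simp add: sum_distrib_left)
      also have "\<dots> = \<kappa> * sum \<mu> G" by (simp only: sumB' split)
      also have "\<dots> \<le> \<kappa>" using \<mu>(3) kp by simp
      finally show ?thesis .
    qed
    have "lam \<in> LamM h l p \<kappa> \<nu> x y"
      unfolding LamM_def Lam_def using eq I sabs by (simp add: lam_def)
    then show "LamM h l p \<kappa> \<nu> x y \<noteq> {}" by blast
  qed
  have HU: "\<And>i z0 Z. i \<in> {1..p} \<Longrightarrow> z0 \<in> U \<Longrightarrow> Z \<longlonglongrightarrow> z0 \<Longrightarrow>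
      (\<lambda>k. H i (fst (Z k)) (snd (Z k))) \<longlonglongrightarrow> H i (fst z0) (snd z0)"
  proof -
    fix i z0 and Z :: "nat \<Rightarrow> (real^'n) \<times> (real^'m)"
    assume i: "i \<in> {1..p}" and z0: "z0 \<in> U" and Z: "Z \<longlonglongrightarrow> z0"
    have ev: "eventually (\<lambda>k. Z k \<in> U) sequentially" using topological_tendstoD[OF Z U(1) z0] .
    show "(\<lambda>k. H i (fst (Z k)) (snd (Z k))) \<longlonglongrightarrow> H i (fst z0) (snd z0)"
      using continuous_on_tendsto_compose[OF Ucont'[OF i] Z z0 ev] by (simp add: o_def)
  qed
  have ybU: "(xb, yb) \<in> U" using U(2) ybG by auto
  have shell: "\<exists>\<eta>>0. \<forall>x\<in>D. dist x xb < \<eta> \<longrightarrow> (\<forall>y\<in>\<Gamma> x. (x, y) \<in> U)"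
  proof -
    define K where "K = \<Gamma> xb"
    have Kc: "closed K" using Gclosed[OF xbD] by (simp add: K_def)
    have Kne: "K \<noteq> {}" using ybG by (auto simp: K_def)
    obtain B V where BV: "bounded B" "open V" "xb \<in> V" "\<forall>x\<in>V. Gam h l p x \<subseteq> B"
      using A2 unfolding locally_bounded_at_def by blast
    have Kb: "bounded K" using BV unfolding K_def \<Gamma>_def by (metis bounded_subset)
    have Kcomp: "compact K" using Kc Kb by (simp add: compact_eq_bounded_closed)
    have "compact ({xb} \<times> K)" by (intro compact_Times compact_sing Kcomp)
    moreover have "closed (- U)" using U(1) by (simp add: closed_Compl)
    moreover have "({xb} \<times> K) \<inter> (- U) = {}" using U(2) by (auto simp: K_def)
    ultimately obtain \<delta> where dp: "\<delta> > 0" and sep: "\<forall>a\<in>{xb} \<times> K. \<forall>b\<in>- U. \<delta> \<le> dist a b"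
      using separate_compact_closed by metis
    define e where "e = \<delta> / 2"
    have ep: "e > 0" using dp by (simp add: e_def)
    have tube: "\<And>x y. dist x xb < e \<Longrightarrow> infdist y K < e \<Longrightarrow> (x, y) \<in> U"
    proof (rule ccontr)
      fix x y assume dx: "dist x xb < e" and dy: "infdist y K < e" and nU: "(x, y) \<notin> U"
      obtain k where k: "k \<in> K" "infdist y K = dist y k" using infdist_attains_inf[OF Kc Kne] by metis
      have "dist (xb, k) (x, y) = sqrt ((dist xb x)\<^sup>2 + (dist k y)\<^sup>2)" by (rule dist_Pair_Pair)
      also have "\<dots> \<le> dist xb x + dist k y" by (rule sqrt_sum_squares_le_sum) auto
      also have "\<dots> < \<delta>" using dx dy k by (simp add: e_def dist_commute)
      finally have "dist (xb, k) (x, y) < \<delta>" .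
      moreover have "\<delta> \<le> dist (xb, k) (x, y)" using sep k nU by auto
      ultimately show False by simp
    qed
    have claim: "\<exists>\<eta>>0. \<forall>x\<in>D. dist x xb < \<eta> \<longrightarrow> (\<forall>y\<in>\<Gamma> x. infdist y K < e)"
    proof (rule ccontr)
      assume nc: "\<not> (\<exists>\<eta>>0. \<forall>x\<in>D. dist x xb < \<eta> \<longrightarrow> (\<forall>y\<in>\<Gamma> x. infdist y K < e))"
      have "\<forall>k::nat. \<exists>xy. fst xy \<in> D \<and> dist (fst xy) xb < 1 / real (Suc k) \<and> snd xy \<in> \<Gamma> (fst xy) \<and> e \<le> infdist (snd xy) K"
      proof
        fix k :: nat
        have "(1::real) / real (Suc k) > 0" by simp
        then obtain x y where "x \<in> D" "dist x xb < 1 / real (Suc k)" "y \<in> \<Gamma> x" "\<not> infdist y K < e"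
          using nc by blast
        then show "\<exists>xy. fst xy \<in> D \<and> dist (fst xy) xb < 1 / real (Suc k) \<and> snd xy \<in> \<Gamma> (fst xy) \<and> e \<le> infdist (snd xy) K"
          by (intro exI[of _ "(x, y)"]) auto
      qed
      then obtain XY where XY: "\<And>k. fst (XY k) \<in> D \<and> dist (fst (XY k)) xb < 1 / real (Suc k) \<and> snd (XY k) \<in> \<Gamma> (fst (XY k)) \<and> e \<le> infdist (snd (XY k)) K"
        by metis
      define X where "X = (\<lambda>k. fst (XY k))"
      define Y where "Y = (\<lambda>k. snd (XY k))"
      have XD: "\<And>k. X k \<in> D" and YG: "\<And>k. Y k \<in> \<Gamma> (X k)" and Ye: "\<And>k. e \<le> infdist (Y k) K"
        using XY by (auto simp: X_def Y_def)
      have Xlim: "X \<longlonglongrightarrow> xb" by (rule seq_inv_conv) (use XY in \<open>simp add: X_def\<close>)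
      have "\<forall>k. \<exists>t. 0 \<le> t \<and> t \<le> 1 \<and> infdist (yb + t *\<^sub>R (Y k - yb)) K = e / 2"
      proof
        fix k
        have "continuous_on {0..1} (\<lambda>t::real. infdist (yb + t *\<^sub>R (Y k - yb)) K)"
          by (intro continuous_at_imp_continuous_on ballI continuous_infdist continuous_intros)
        moreover have "infdist (yb + 0 *\<^sub>R (Y k - yb)) K \<le> e / 2" using ybG ep by (simp add: K_def)
        moreover have "e / 2 \<le> infdist (yb + 1 *\<^sub>R (Y k - yb)) K" using Ye[of k] ep by simp
        ultimately show "\<exists>t. 0 \<le> t \<and> t \<le> 1 \<and> infdist (yb + t *\<^sub>R (Y k - yb)) K = e / 2"
          using IVT'[of "\<lambda>t. infdist (yb + t *\<^sub>R (Y k - yb)) K" 0 "e/2" 1] by auto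
      qed
      then obtain T where T: "\<And>k. 0 \<le> T k \<and> T k \<le> 1 \<and> infdist (yb + T k *\<^sub>R (Y k - yb)) K = e / 2"
        by metis
      define W where "W = (\<lambda>k. yb + T k *\<^sub>R (Y k - yb))"
      have Wc: "\<And>k. W k = (1 - T k) *\<^sub>R yb + T k *\<^sub>R Y k" by (simp add: W_def algebra_simps)
      define S where "S = {w. infdist w K = e / 2}"
      have WS: "\<And>k. W k \<in> S" using T by (simp add: S_def W_def)
      have Sc: "closed S" unfolding S_def
        by (intro closed_Collect_eq continuous_on_const continuous_at_imp_continuous_on ballI continuous_infdist continuous_intros)
      obtain b where b: "\<forall>k\<in>K. norm k \<le> b" using Kb by (auto simp: bounded_pos)
      have Sb: "bounded S"
      proof -
        have "S \<subseteq> cball 0 (b + e / 2)"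
        proof
          fix w assume "w \<in> S"
          then have wi: "infdist w K = e / 2" by (simp add: S_def)
          obtain k where k: "k \<in> K" "infdist w K = dist w k" using infdist_attains_inf[OF Kc Kne] by metis
          have "norm w \<le> norm k + dist w k" by (metis dist_norm norm_triangle_sub add.commute)
          then show "w \<in> cball 0 (b + e / 2)" using b k wi by auto
        qed
        then show ?thesis by (rule bounded_subset[OF bounded_cball])
      qed
      have "seq_compact S" using Sc Sb by (intro compact_imp_seq_compact) (simp add: compact_eq_bounded_closed)
      then obtain w0 r where w0: "w0 \<in> S" and r: "strict_mono r" and Wr: "(W \<circ> r) \<longlonglongrightarrow> w0"
        using seq_compactE[of S W] WS by metis
      have Xr: "(X \<circ> r) \<longlonglongrightarrow> xb" using LIMSEQ_subseq_LIMSEQ[OF Xlim r] .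
      have w0U: "(xb, w0) \<in> U" using tube[of xb w0] w0 ep by (simp add: S_def)
      have c1: "(\<lambda>k. (X (r k), W (r k))) \<longlonglongrightarrow> (xb, w0)" using tendsto_Pair[OF Xr Wr] by (simp add: o_def)
      have c2: "(\<lambda>k. (X (r k), yb)) \<longlonglongrightarrow> (xb, yb)" using tendsto_Pair[OF Xr tendsto_const] by (simp add: o_def)
      have L1: "\<And>i. i \<in> {1..p} \<Longrightarrow> (\<lambda>k. H i (X (r k)) (W (r k))) \<longlonglongrightarrow> H i xb w0"
        using HU[OF _ w0U c1] by simp
      have L2: "\<And>i. i \<in> {1..p} \<Longrightarrow> (\<lambda>k. H i (X (r k)) yb) \<longlonglongrightarrow> H i xb yb"
        using HU[OF _ ybU c2] by simp
      have Lyb: "(\<forall>i\<in>{1..l}. H i xb yb \<le> 0) \<and> (\<forall>i\<in>{l+1..p}. H i xb yb = 0)"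
        using ybG gam_iff Dfin[OF xbD] by blast
      have bI: "\<And>i k. i \<in> {1..l} \<Longrightarrow> H i (X k) (W k) \<le> max 0 (H i (X k) yb)"
      proof -
        fix i k assume i: "i \<in> {1..l}"
        have LY: "H i (X k) (Y k) \<le> 0" using YG[of k] gam_iff Dfin[OF XD] i by blast
        have "H i (X k) (W k) \<le> (1 - T k) * H i (X k) yb + T k * H i (X k) (Y k)"
          unfolding Wc using cvx[OF XD i] T by blast
        also have "\<dots> \<le> (1 - T k) * H i (X k) yb" using LY T[of k] by (simp add: mult_nonneg_nonpos)
        also have "\<dots> \<le> max 0 (H i (X k) yb)" using T[of k]
          by (cases "H i (X k) yb \<ge> 0") (auto simp: mult_left_le_one_le mult_nonneg_nonpos2 mult_le_0_iff)
        finally show "H i (X k) (W k) \<le> max 0 (H i (X k) yb)" .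
      qed
      have bJ: "\<And>i k. i \<in> {l+1..p} \<Longrightarrow> \<bar>H i (X k) (W k)\<bar> \<le> \<bar>H i (X k) yb\<bar>"
      proof -
        fix i k assume i: "i \<in> {l+1..p}"
        have LY: "H i (X k) (Y k) = 0" using YG[of k] gam_iff Dfin[OF XD] i by blast
        have "H i (X k) (W k) = (1 - T k) * H i (X k) yb" unfolding Wc using aff[OF i] LY by simp
        then show "\<bar>H i (X k) (W k)\<bar> \<le> \<bar>H i (X k) yb\<bar>" using T[of k] by (simp add: abs_mult mult_left_le_one_le)
      qed
      have "w0 \<in> K"
      proof -
        have "(\<forall>i\<in>{1..l}. H i xb w0 \<le> 0) \<and> (\<forall>i\<in>{l+1..p}. H i xb w0 = 0)"
        proof (intro conjI ballI)
          fix i assume i: "i \<in> {1..l}"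
          have ip: "i \<in> {1..p}" using i Iin by auto
          have "H i xb w0 \<le> max 0 (H i xb yb)"
            by (rule LIMSEQ_le[OF L1[OF ip] tendsto_max[OF tendsto_const L2[OF ip]]]) (use bI[OF i] in auto)
          then show "H i xb w0 \<le> 0" using Lyb i by simp
        next
          fix i assume i: "i \<in> {l+1..p}"
          have ip: "i \<in> {1..p}" using i Iin by auto
          have "\<bar>H i xb w0\<bar> \<le> \<bar>H i xb yb\<bar>"
            by (rule LIMSEQ_le[OF tendsto_rabs[OF L1[OF ip]] tendsto_rabs[OF L2[OF ip]]]) (use bJ[OF i] in auto)
          then show "H i xb w0 = 0" using Lyb i by simp
        qed
        then show ?thesis using gam_iff[of xb w0] Ufin'[OF w0U] by (simp add: K_def)
      qed
      then have "infdist w0 K = 0" by simp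
      then show False using w0 ep by (simp add: S_def)
    qed
    then obtain \<eta> where eta: "\<eta> > 0" "\<forall>x\<in>D. dist x xb < \<eta> \<longrightarrow> (\<forall>y\<in>\<Gamma> x. infdist y K < e)" by blast
    show ?thesis
    proof (intro exI[of _ "min \<eta> e"] conjI ballI impI)
      show "min \<eta> e > 0" using eta ep by simp
      fix x y assume "x \<in> D" "dist x xb < min \<eta> e" "y \<in> \<Gamma> x"
      then show "(x, y) \<in> U" using eta tube by auto
    qed
  qed
  show ?thesis
  proof
    assume R: "R_regular h l p xb yb (domG (Gam h l p))"
    then obtain \<kappa> UR where kp: "\<kappa> > 0" and URo: "open UR" and xyR: "(xb, yb) \<in> UR"
      and EB0: "\<forall>x y. (x, y) \<in> UR \<and> x \<in> D \<longrightarrow> edist_set y (\<Gamma> x) \<le> ereal \<kappa> * resid h l p x y"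
      unfolding R_regular_def D_def \<Gamma>_def by blast
    have EB: "\<forall>x y. (x, y) \<in> UR \<and> x \<in> D \<longrightarrow> infdist y (\<Gamma> x) \<le> \<kappa> * Rr x y"
    proof (intro allI impI)
      fix x y assume a: "(x, y) \<in> UR \<and> x \<in> D"
      then have "edist_set y (\<Gamma> x) \<le> ereal \<kappa> * resid h l p x y" using EB0 by blast
      moreover have "edist_set y (\<Gamma> x) = ereal (infdist y (\<Gamma> x))" using Gne a by (simp add: edist_set_def)
      moreover have "resid h l p x y = ereal (Rr x y)" using resid_eq Dfin a by blast
      ultimately show "infdist y (\<Gamma> x) \<le> \<kappa> * Rr x y" by simp
    qed
    show "\<exists>M>0. \<forall>xs vs ys.
       (\<forall>k. xs k \<in> domG (Gam h l p)) \<and> xs \<longlonglongrightarrow> xb \<and> vs \<longlonglongrightarrow> yb \<and>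
       (\<forall>k. vs k \<notin> Gam h l p (xs k)) \<and>
       (\<forall>k. ys k \<in> proj (vs k) (Gam h l p (xs k)))
       \<longrightarrow> (\<forall>\<^sub>F k in sequentially. LamM h l p M (vs k) (xs k) (ys k) \<noteq> {})"
    proof (intro exI[of _ \<kappa>] conjI kp allI impI)
      fix xs vs ys assume hyp: "(\<forall>k. xs k \<in> domG (Gam h l p)) \<and> xs \<longlonglongrightarrow> xb \<and> vs \<longlonglongrightarrow> yb \<and>
       (\<forall>k. vs k \<notin> Gam h l p (xs k)) \<and> (\<forall>k. ys k \<in> proj (vs k) (Gam h l p (xs k)))"
      then have xsD: "\<And>k. xs k \<in> D" and xsl: "xs \<longlonglongrightarrow> xb" and vsl: "vs \<longlonglongrightarrow> yb"
        and vsn: "\<And>k. vs k \<notin> \<Gamma> (xs k)" and ysp: "\<And>k. ys k \<in> proj (vs k) (\<Gamma> (xs k))"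
        unfolding D_def \<Gamma>_def by auto
      have xv: "(\<lambda>k. (xs k, vs k)) \<longlonglongrightarrow> (xb, yb)" using tendsto_Pair[OF xsl vsl] .
      have Hl: "\<And>i. i \<in> {1..p} \<Longrightarrow> (\<lambda>k. H i (xs k) (vs k)) \<longlonglongrightarrow> H i xb yb"
        using HU[OF _ ybU xv] by simp
      have Lyb: "(\<forall>i\<in>{1..l}. H i xb yb \<le> 0) \<and> (\<forall>i\<in>{l+1..p}. H i xb yb = 0)"
        using ybG gam_iff Dfin[OF xbD] by blast
      have Rsmall: "\<And>\<epsilon>. \<epsilon> > 0 \<Longrightarrow> eventually (\<lambda>k. Rr (xs k) (vs k) \<le> \<epsilon>) sequentially"
      proof -
        fix \<epsilon> :: real assume ep: "\<epsilon> > 0"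
        have "eventually (\<lambda>k. \<forall>i\<in>{1..p}. dist (H i (xs k) (vs k)) (H i xb yb) < \<epsilon>) sequentially"
        proof (rule eventually_ball_finite)
          show "\<forall>i\<in>{1..p}. \<forall>\<^sub>F k in sequentially. dist (H i (xs k) (vs k)) (H i xb yb) < \<epsilon>"
          proof
            fix i assume "i \<in> {1..p}"
            show "\<forall>\<^sub>F k in sequentially. dist (H i (xs k) (vs k)) (H i xb yb) < \<epsilon>"
              using tendstoD[OF Hl[OF \<open>i \<in> {1..p}\<close>] ep] .
          qed
        qed simp
        then show "eventually (\<lambda>k. Rr (xs k) (vs k) \<le> \<epsilon>) sequentially"
        proof (rule eventually_mono)
          fix k assume a: "\<forall>i\<in>{1..p}. dist (H i (xs k) (vs k)) (H i xb yb) < \<epsilon>"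
          show "Rr (xs k) (vs k) \<le> \<epsilon>"
          proof (rule Rr_le)
            show "0 \<le> \<epsilon>" using ep by simp
            show "\<forall>i\<in>{1..l}. H i (xs k) (vs k) \<le> \<epsilon>"
            proof
              fix i assume i: "i \<in> {1..l}"
              then have ip: "i \<in> {1..p}" using Iin by auto
              have "dist (H i (xs k) (vs k)) (H i xb yb) < \<epsilon>" using a ip by blast
              moreover have "H i xb yb \<le> 0" using Lyb i by blast
              ultimately show "H i (xs k) (vs k) \<le> \<epsilon>" unfolding dist_real_def abs_less_iff by linarith
            qed
            show "\<forall>i\<in>{l+1..p}. \<bar>H i (xs k) (vs k)\<bar> \<le> \<epsilon>"
            proof
              fix i assume i: "i \<in> {l+1..p}"
              then have ip: "i \<in> {1..p}" using Iin by auto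
              have "dist (H i (xs k) (vs k)) (H i xb yb) < \<epsilon>" using a ip by blast
              moreover have "H i xb yb = 0" using Lyb i by blast
              ultimately show "\<bar>H i (xs k) (vs k)\<bar> \<le> \<epsilon>" by (simp add: dist_real_def)
            qed
          qed
        qed
      qed
      have ysl: "ys \<longlonglongrightarrow> yb"
      proof (rule tendstoI)
        fix \<epsilon> :: real assume ep: "\<epsilon> > 0"
        have e1: "eventually (\<lambda>k. (xs k, vs k) \<in> UR) sequentially" using topological_tendstoD[OF xv URo xyR] .
        have e2: "eventually (\<lambda>k. Rr (xs k) (vs k) \<le> \<epsilon> / (3 * \<kappa>)) sequentially" using Rsmall ep kp by simp
        have e2p: "\<epsilon> / 2 > 0" using ep by simp
        have e3: "eventually (\<lambda>k. dist (vs k) yb < \<epsilon> / 2) sequentially" using tendstoD[OF vsl e2p] .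
        show "eventually (\<lambda>k. dist (ys k) yb < \<epsilon>) sequentially"
          using eventually_conj[OF e1 eventually_conj[OF e2 e3]]
        proof (rule eventually_mono)
          fix k assume a: "(xs k, vs k) \<in> UR \<and> Rr (xs k) (vs k) \<le> \<epsilon> / (3 * \<kappa>) \<and> dist (vs k) yb < \<epsilon> / 2"
          have "norm (ys k - vs k) = infdist (vs k) (\<Gamma> (xs k))" using projdist[OF ysp Gclosed[OF xsD]] .
          also have "\<dots> \<le> \<kappa> * Rr (xs k) (vs k)" using EB a xsD by blast
          also have "\<dots> \<le> \<kappa> * (\<epsilon> / (3 * \<kappa>))" using a kp by (intro mult_left_mono) auto
          also have "\<dots> = \<epsilon> / 3" using kp by simp
          finally have "norm (ys k - vs k) \<le> \<epsilon> / 3" .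
          moreover have "dist (ys k) yb \<le> norm (ys k - vs k) + dist (vs k) yb"
            using dist_triangle[of "ys k" yb "vs k"] by (simp add: dist_norm)
          ultimately show "dist (ys k) yb < \<epsilon>" using a ep by linarith
        qed
      qed
      have xy: "(\<lambda>k. (xs k, ys k)) \<longlonglongrightarrow> (xb, yb)" using tendsto_Pair[OF xsl ysl] .
      have "eventually (\<lambda>k. (xs k, ys k) \<in> U \<inter> UR) sequentially"
        using topological_tendstoD[OF xy open_Int[OF U(1) URo]] ybU xyR by simp
      then show "\<forall>\<^sub>F k in sequentially. LamM h l p \<kappa> (vs k) (xs k) (ys k) \<noteq> {}"
      proof (rule eventually_mono)
        fix k assume "(xs k, ys k) \<in> U \<inter> UR"
        then show "LamM h l p \<kappa> (vs k) (xs k) (ys k) \<noteq> {}"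
          using P[OF kp URo EB xsD] vsn ysp by blast
      qed
    qed
  next
    assume "\<exists>M>0. \<forall>xs vs ys.
       (\<forall>k. xs k \<in> domG (Gam h l p)) \<and> xs \<longlonglongrightarrow> xb \<and> vs \<longlonglongrightarrow> yb \<and>
       (\<forall>k. vs k \<notin> Gam h l p (xs k)) \<and>
       (\<forall>k. ys k \<in> proj (vs k) (Gam h l p (xs k)))
       \<longrightarrow> (\<forall>\<^sub>F k in sequentially. LamM h l p M (vs k) (xs k) (ys k) \<noteq> {})"
    then obtain M where Mp: "M > 0" and BM: "\<And>xs vs ys.
       (\<forall>k. xs k \<in> D) \<and> xs \<longlonglongrightarrow> xb \<and> vs \<longlonglongrightarrow> yb \<and>
       (\<forall>k. vs k \<notin> \<Gamma> (xs k)) \<and> (\<forall>k. ys k \<in> proj (vs k) (\<Gamma> (xs k)))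
       \<Longrightarrow> (\<forall>\<^sub>F k in sequentially. LamM h l p M (vs k) (xs k) (ys k) \<noteq> {})"
      unfolding D_def \<Gamma>_def by blast
    show "R_regular h l p xb yb (domG (Gam h l p))"
    proof (rule ccontr)
      assume nR: "\<not> R_regular h l p xb yb (domG (Gam h l p))"
      have "\<forall>k::nat. \<exists>z. fst z \<in> D \<and> dist z (xb, yb) < 1 / real (Suc k) \<and> infdist (snd z) (\<Gamma> (fst z)) > real (Suc k) * Rr (fst z) (snd z)"
      proof
        fix k :: nat
        have "\<not> (\<forall>x y. (x, y) \<in> ball (xb, yb) (1 / real (Suc k)) \<and> x \<in> D \<longrightarrow>
             edist_set y (\<Gamma> x) \<le> ereal (real (Suc k)) * resid h l p x y)"
        proof
          assume a: "\<forall>x y. (x, y) \<in> ball (xb, yb) (1 / real (Suc k)) \<and> x \<in> D \<longrightarrow>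
             edist_set y (\<Gamma> x) \<le> ereal (real (Suc k)) * resid h l p x y"
          have "R_regular h l p xb yb (domG (Gam h l p))"
            unfolding R_regular_def
          proof (intro exI[of _ "real (Suc k)"] conjI exI[of _ "ball (xb, yb) (1 / real (Suc k))"])
            show "real (Suc k) > 0" by simp
            show "open (ball (xb, yb) (1 / real (Suc k)))" by simp
            show "(xb, yb) \<in> ball (xb, yb) (1 / real (Suc k))" by simp
            show "\<forall>x y. (x, y) \<in> ball (xb, yb) (1 / real (Suc k)) \<and> x \<in> domG (Gam h l p) \<longrightarrow>
               edist_set y (Gam h l p x) \<le> ereal (real (Suc k)) * resid h l p x y"
              using a unfolding D_def \<Gamma>_def by blast
          qed
          then show False using nR by blast
        qed
        then obtain x y where a: "(x, y) \<in> ball (xb, yb) (1 / real (Suc k))" "x \<in> D"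
          "\<not> edist_set y (\<Gamma> x) \<le> ereal (real (Suc k)) * resid h l p x y" by blast
        have "edist_set y (\<Gamma> x) = ereal (infdist y (\<Gamma> x))" using Gne a by (simp add: edist_set_def)
        moreover have "resid h l p x y = ereal (Rr x y)" using resid_eq Dfin a by blast
        ultimately have "infdist y (\<Gamma> x) > real (Suc k) * Rr x y" using a(3) by simp
        then show "\<exists>z. fst z \<in> D \<and> dist z (xb, yb) < 1 / real (Suc k) \<and> infdist (snd z) (\<Gamma> (fst z)) > real (Suc k) * Rr (fst z) (snd z)"
          using a by (intro exI[of _ "(x, y)"]) (auto simp: dist_commute)
      qed
      then obtain Z where Z: "\<And>k. fst (Z k) \<in> D \<and> dist (Z k) (xb, yb) < 1 / real (Suc k) \<and> infdist (snd (Z k)) (\<Gamma> (fst (Z k))) > real (Suc k) * Rr (fst (Z k)) (snd (Z k))"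
        by metis
      define X where "X = (\<lambda>k. fst (Z k))"
      define N where "N = (\<lambda>k. snd (Z k))"
      have XD: "\<And>k. X k \<in> D" using Z by (simp add: X_def)
      have big: "\<And>k. infdist (N k) (\<Gamma> (X k)) > real (Suc k) * Rr (X k) (N k)" using Z by (simp add: X_def N_def)
      have Xl: "X \<longlonglongrightarrow> xb"
      proof (rule seq_inv_conv)
        fix k show "dist (X k) xb < 1 / real (Suc k)"
          using Z[of k] dist_fst_le[of "Z k" "(xb, yb)"] by (simp add: X_def)
      qed
      have Nl: "N \<longlonglongrightarrow> yb"
      proof (rule seq_inv_conv)
        fix k show "dist (N k) yb < 1 / real (Suc k)"
          using Z[of k] dist_snd_le[of "Z k" "(xb, yb)"] by (simp add: N_def)
      qed
      have Nn: "\<And>k. N k \<notin> \<Gamma> (X k)"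
      proof
        fix k assume "N k \<in> \<Gamma> (X k)"
        then have "infdist (N k) (\<Gamma> (X k)) = 0" by simp
        moreover have "0 \<le> real (Suc k) * Rr (X k) (N k)" using Rr_ge by simp
        ultimately show False using big[of k] by simp
      qed
      have "\<forall>k. \<exists>y. y \<in> proj (N k) (\<Gamma> (X k))"
      proof
        fix k
        obtain y where y: "y \<in> \<Gamma> (X k)" "\<And>w. w \<in> \<Gamma> (X k) \<Longrightarrow> dist (N k) y \<le> dist (N k) w"
          using distance_attains_inf[OF Gclosed[OF XD] Gne[OF XD]] by metis
        then have "y \<in> proj (N k) (\<Gamma> (X k))" by (auto simp: proj_def dist_norm norm_minus_commute)
        then show "\<exists>y. y \<in> proj (N k) (\<Gamma> (X k))" by blast
      qed
      then obtain Y where Yp: "\<And>k. Y k \<in> proj (N k) (\<Gamma> (X k))" by metis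
      have e1: "\<forall>\<^sub>F k in sequentially. LamM h l p M (N k) (X k) (Y k) \<noteq> {}"
        using BM[of X N Y] XD Xl Nl Nn Yp by blast
      obtain \<eta> where eta: "\<eta> > 0" "\<forall>x\<in>D. dist x xb < \<eta> \<longrightarrow> (\<forall>y\<in>\<Gamma> x. (x, y) \<in> U)" using shell by blast
      have e2: "eventually (\<lambda>k. dist (X k) xb < \<eta>) sequentially" using tendstoD[OF Xl eta(1)] .
      obtain n0 where n0: "M \<le> real n0" using real_arch_simple by blast
      have e3: "eventually (\<lambda>k. M \<le> real (Suc k)) sequentially"
        unfolding eventually_sequentially using n0 by (intro exI[of _ n0]) auto
      obtain k where k1: "LamM h l p M (N k) (X k) (Y k) \<noteq> {}" and k2: "dist (X k) xb < \<eta>"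
        and k3: "M \<le> real (Suc k)"
        using eventually_happens'[OF sequentially_bot eventually_conj[OF e1 eventually_conj[OF e2 e3]]] by blast
      obtain lam where lam: "lam \<in> LamM h l p M (N k) (X k) (Y k)" using k1 by blast
      have YG: "Y k \<in> \<Gamma> (X k)" using Yp[of k] by (simp add: proj_def)
      have XYU: "(X k, Y k) \<in> U" using eta(2) XD k2 YG by blast
      have "norm (Y k - N k) \<le> M * Rr (X k) (N k)" using Q[OF XD XYU Nn Yp lam] .
      moreover have "norm (Y k - N k) = infdist (N k) (\<Gamma> (X k))" using projdist[OF Yp Gclosed[OF XD]] .
      moreover have "M * Rr (X k) (N k) \<le> real (Suc k) * Rr (X k) (N k)"
        using k3 Rr_ge by (intro mult_right_mono) auto
      ultimately show False using big[of k] by simp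
    qed
  qed
qed

end
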